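(* Let $M$ be a monoid with identity $1$ (not necessarily finite). (i) If $M$ is a group, then $\sigma_m(M)=\sigma_m^*(M)=\sigma_s(M)$. (ii) If $S=M-\{1\}$ is nonempty and is a subsemigroup of $M$, then $\sigma_m^*(M)\le\sigma_m(M)=\sigma_s(S)$ and $\sigma_s(M)=2$. (iii) If $M$ is not a group and $M-\{1\}$ is not a nonempty subsemigroup of $M$, then $\sigma_m(M)=\sigma_m^*(M)=\sigma_s(M)=2$.
   Context: A subsemigroup is a nonempty subset closed under the operation. For a monoid $M$: a submonoid is a subsemigroup containing the identity of $M$; a monoidal subsemigroup is a subsemigroup that is a monoid in its own right (its identity need not be that of $M$). $\sigma_s(M)$, $\sigma_m(M)$, $\sigma_m^*(M)$ denote the least positive integer $n$ such that $M$ is the union of $n$ proper subsemigroups, proper submonoids, respectively proper monoidal subsemigroups; each is $\infty$ if no such finite $n$ exists. For a semigroup $S$, $\sigma_s(S)$ is defined analogously with proper subsemigroups. *)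

theory Defs
  imports "HOL-Algebra.Group" "HOL-Library.Extended_Nat"
begin

definition is_subsemigroup :: "('a \<Rightarrow> 'a \<Rightarrow> 'a) \<Rightarrow> 'a set \<Rightarrow> 'a set \<Rightarrow> bool" where
  "is_subsemigroup f A H \<longleftrightarrow> H \<subseteq> A \<and> H \<noteq> {} \<and> (\<forall>x\<in>H. \<forall>y\<in>H. f x y \<in> H)"

definition covnum :: "('a set \<Rightarrow> bool) \<Rightarrow> 'a set \<Rightarrow> enat" where
  "covnum P A =
     (if \<exists>F. finite F \<and> (\<forall>H\<in>F. P H \<and> H \<noteq> A) \<and> \<Union>F = A
      then enat (LEAST n. \<exists>F. finite F \<and> card F = n \<and> (\<forall>H\<in>F. P H \<and> H \<noteq> A) \<and> \<Union>F = A)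
      else \<infinity>)"

definition sigma_s_semi :: "('a \<Rightarrow> 'a \<Rightarrow> 'a) \<Rightarrow> 'a set \<Rightarrow> enat" where
  "sigma_s_semi f A = covnum (is_subsemigroup f A) A"

definition sigma_s :: "('a, 'b) monoid_scheme \<Rightarrow> enat" where
  "sigma_s M = sigma_s_semi (mult M) (carrier M)"

definition is_submonoid :: "('a, 'b) monoid_scheme \<Rightarrow> 'a set \<Rightarrow> bool" where
  "is_submonoid M H \<longleftrightarrow> is_subsemigroup (mult M) (carrier M) H \<and> one M \<in> H"

definition is_monoidal_subsemigroup :: "('a, 'b) monoid_scheme \<Rightarrow> 'a set \<Rightarrow> bool" where
  "is_monoidal_subsemigroup M H \<longleftrightarrow> is_subsemigroup (mult M) (carrier M) H \<and>
     (\<exists>e\<in>H. \<forall>x\<in>H. mult M e x = x \<and> mult M x e = x)"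

definition sigma_m :: "('a, 'b) monoid_scheme \<Rightarrow> enat" where
  "sigma_m M = covnum (is_submonoid M) (carrier M)"

definition sigma_m_star :: "('a, 'b) monoid_scheme \<Rightarrow> enat" where
  "sigma_m_star M = covnum (is_monoidal_subsemigroup M) (carrier M)"

end

theory Submission
  imports Defs
begin

definition iscov :: "('a set \<Rightarrow> bool) \<Rightarrow> 'a set \<Rightarrow> 'a set set \<Rightarrow> bool" where
  "iscov P A F \<longleftrightarrow> finite F \<and> (\<forall>H\<in>F. P H \<and> H \<noteq> A) \<and> \<Union>F = A"

lemma covnum_le: "iscov P A F \<Longrightarrow> covnum P A \<le> enat (card F)"
  unfolding covnum_def iscov_def
  by (auto intro!: Least_le)

lemma covnum_least: assumes "\<exists>F. iscov P A F"
  shows "\<exists>F. iscov P A F \<and> covnum P A = enat (card F)"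
proof -
  define Q where "Q = (\<lambda>n. \<exists>F. finite F \<and> card F = n \<and> (\<forall>H\<in>F. P H \<and> H \<noteq> A) \<and> \<Union>F = A)"
  obtain F0 where "iscov P A F0" using assms by blast
  then have "Q (card F0)" unfolding Q_def iscov_def by blast
  then have "Q (Least Q)" by (rule LeastI)
  then obtain F where F: "finite F" "card F = Least Q"
    "\<forall>H\<in>F. P H \<and> H \<noteq> A" "\<Union>F = A" unfolding Q_def by blast
  have ex: "\<exists>F. finite F \<and> (\<forall>H\<in>F. P H \<and> H \<noteq> A) \<and> \<Union>F = A"
    using assms unfolding iscov_def by blast
  have "covnum P A = enat (Least Q)" unfolding covnum_def Q_def using ex by (simp only: if_True)
  moreover have "iscov P A F" using F unfolding iscov_def by blast
  ultimately show ?thesis using F(2) by metis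
qed

lemma covnum_transfer:
  assumes "\<And>F. iscov P A F \<Longrightarrow> \<exists>G. iscov Q B G \<and> card G \<le> card F"
  shows "covnum Q B \<le> covnum P A"
proof (cases "\<exists>F. iscov P A F")
  case True
  then obtain F where F: "iscov P A F" "covnum P A = enat (card F)" using covnum_least by blast
  then obtain G where "iscov Q B G" "card G \<le> card F" using assms by blast
  then have "covnum Q B \<le> enat (card G)" using covnum_le by blast
  also have "\<dots> \<le> covnum P A" using F \<open>card G \<le> card F\<close> by simp
  finally show ?thesis .
next
  case False
  then have "covnum P A = \<infinity>" unfolding covnum_def iscov_def by auto
  then show ?thesis by simp
qed

lemma covnum_mono:
  assumes "\<And>H. P H \<Longrightarrow> Q H"
  shows "covnum Q A \<le> covnum P A"
  by (rule covnum_transfer) (use assms in \<open>auto simp: iscov_def\<close>)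

lemma covnum_ge2: assumes "A \<noteq> {}" shows "2 \<le> covnum P A"
proof (cases "\<exists>F. iscov P A F")
  case True
  then obtain F where F: "iscov P A F" "covnum P A = enat (card F)" using covnum_least by blast
  have "card F \<noteq> 0"
  proof
    assume "card F = 0"
    then have "F = {}" using F(1) unfolding iscov_def by auto
    then show False using F(1) assms unfolding iscov_def by auto
  qed
  moreover have "card F \<noteq> 1"
  proof
    assume "card F = 1"
    then obtain H where "F = {H}" using card_1_singletonE by blast
    then show False using F(1) unfolding iscov_def by auto
  qed
  ultimately have "card F \<ge> 2" by linarith
  then show ?thesis using F(2) by (simp add: numeral_eq_enat)
next
  case False
  then have "covnum P A = \<infinity>" unfolding covnum_def iscov_def by auto
  then show ?thesis by simp
qed

lemma covnum_le2: assumes "iscov P A {X, Y}" shows "covnum P A \<le> 2"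
proof -
  have "covnum P A \<le> enat (card {X, Y})" using covnum_le[OF assms] .
  also have "\<dots> \<le> 2" by (simp add: card_insert_if numeral_eq_enat)
  finally show ?thesis .
qed

lemma sm_le_sms: assumes "monoid M" shows "sigma_m_star M \<le> sigma_m M"
  unfolding sigma_m_star_def sigma_m_def
proof (rule covnum_mono)
  fix H assume H: "is_submonoid M H"
  then have sH: "is_subsemigroup (mult M) (carrier M) H" and o: "\<one>\<^bsub>M\<^esub> \<in> H"
    unfolding is_submonoid_def by auto
  have "\<forall>x\<in>H. \<one>\<^bsub>M\<^esub> \<otimes>\<^bsub>M\<^esub> x = x \<and> x \<otimes>\<^bsub>M\<^esub> \<one>\<^bsub>M\<^esub> = x"
    using sH assms unfolding is_subsemigroup_def by (auto simp: monoid.l_one monoid.r_one subset_iff)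
  then show "is_monoidal_subsemigroup M H" using sH o unfolding is_monoidal_subsemigroup_def by blast
qed

lemma ss_le_sms: "sigma_s M \<le> sigma_m_star M"
  unfolding sigma_m_star_def sigma_s_def sigma_s_semi_def
  using covnum_mono[of "is_monoidal_subsemigroup M" "is_subsemigroup (mult M) (carrier M)" "carrier M"]
  unfolding is_monoidal_subsemigroup_def by blast

lemma insert_one_submonoid:
  fixes M (structure)
  assumes "monoid M" "is_subsemigroup (mult M) (carrier M) H"
  shows "is_submonoid M (insert \<one>\<^bsub>M\<^esub> H)"
proof -
  interpret monoid M by fact
  have HC: "H \<subseteq> carrier M" and cl: "\<forall>x\<in>H. \<forall>y\<in>H. x \<otimes> y \<in> H"
    using assms(2) unfolding is_subsemigroup_def by auto
  have "\<forall>x\<in>insert \<one> H. \<forall>y\<in>insert \<one> H. x \<otimes> y \<in> insert \<one> H"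
  proof (intro ballI)
    fix x y assume x: "x \<in> insert \<one> H" and y: "y \<in> insert \<one> H"
    show "x \<otimes> y \<in> insert \<one> H"
    proof (cases "x = \<one>")
      case True
      then show ?thesis using y HC by auto
    next
      case False
      then have xH: "x \<in> H" using x by simp
      show ?thesis
      proof (cases "y = \<one>")
        case True
        then show ?thesis using xH HC by auto
      next
        case False
        then have "y \<in> H" using y by simp
        then show ?thesis using xH cl by simp
      qed
    qed
  qed
  then show ?thesis using HC unfolding is_submonoid_def is_subsemigroup_def by auto
qed


lemma group_part:
  fixes M (structure)
  assumes "group M"
  shows "sigma_m M \<le> sigma_s M"
  unfolding sigma_m_def sigma_s_def sigma_s_semi_def
proof (rule covnum_transfer)
  fix F assume F: "iscov (is_subsemigroup (mult M) (carrier M)) (carrier M) F"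
  interpret group M by fact
  let ?G = "insert \<one> ` F"
  have fin: "finite F" and FP: "\<forall>H\<in>F. is_subsemigroup (mult M) (carrier M) H \<and> H \<noteq> carrier M"
    and FU: "\<Union>F = carrier M" using F unfolding iscov_def by auto
  have "iscov (is_submonoid M) (carrier M) ?G"
    unfolding iscov_def
  proof (intro conjI ballI)
    show "finite ?G" using fin by simp
  next
    fix K assume "K \<in> ?G"
    then obtain H where H: "H \<in> F" "K = insert \<one> H" by blast
    have sH: "is_subsemigroup (mult M) (carrier M) H" "H \<noteq> carrier M" using FP H by auto
    have HC: "H \<subseteq> carrier M" and cl: "\<forall>x\<in>H. \<forall>y\<in>H. x \<otimes> y \<in> H" and ne: "H \<noteq> {}"
      using sH(1) unfolding is_subsemigroup_def by auto
    show "is_submonoid M K" using insert_one_submonoid[OF monoid_axioms sH(1)] H by simp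
    show "K \<noteq> carrier M"
    proof
      assume K: "K = carrier M"
      have n1: "\<one> \<notin> H"
      proof
        assume "\<one> \<in> H"
        then have "K = H" using H by auto
        then show False using K sH by simp
      qed
      obtain x where x: "x \<in> H" using ne by auto
      have xc: "x \<in> carrier M" using x HC by auto
      have "inv x \<noteq> \<one>"
      proof
        assume "inv x = \<one>"
        then have "x = \<one>" using xc by (metis inv_inv inv_one)
        then show False using x n1 by simp
      qed
      moreover have "inv x \<in> carrier M" using xc by simp
      ultimately have "inv x \<in> H" using K H by auto
      then have "x \<otimes> inv x \<in> H" using x cl by auto
      then show False using xc n1 by simp
    qed
  next
    have "F \<noteq> {}" using FU by auto
    then show "\<Union>?G = carrier M" using FU by auto
  qed
  moreover have "card ?G \<le> card F" by (rule card_image_le) (use fin in simp)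
  ultimately show "\<exists>G. iscov (is_submonoid M) (carrier M) G \<and> card G \<le> card F" by blast
qed


lemma part2_s:
  fixes M (structure)
  assumes "monoid M" "carrier M - {\<one>} \<noteq> {}"
    "is_subsemigroup (mult M) (carrier M) (carrier M - {\<one>})"
  shows "sigma_s M = 2"
proof -
  interpret monoid M by fact
  let ?S = "carrier M - {\<one>}"
  have "iscov (is_subsemigroup (mult M) (carrier M)) (carrier M) {?S, {\<one>}}"
    unfolding iscov_def
    using assms(2,3) by (auto simp: is_subsemigroup_def)
  then have "sigma_s M \<le> 2" unfolding sigma_s_def sigma_s_semi_def by (rule covnum_le2)
  moreover have "2 \<le> sigma_s M" unfolding sigma_s_def sigma_s_semi_def
    by (rule covnum_ge2) auto
  ultimately show ?thesis by simp
qed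

lemma part2_a:
  fixes M (structure)
  assumes "monoid M" "carrier M - {\<one>} \<noteq> {}"
    "is_subsemigroup (mult M) (carrier M) (carrier M - {\<one>})"
  shows "sigma_s_semi (mult M) (carrier M - {\<one>}) \<le> sigma_m M"
  unfolding sigma_m_def sigma_s_semi_def
proof (rule covnum_transfer)
  interpret monoid M by fact
  let ?S = "carrier M - {\<one>}"
  have clS: "\<forall>x\<in>?S. \<forall>y\<in>?S. x \<otimes> y \<in> ?S" using assms(3) unfolding is_subsemigroup_def by blast
  fix F assume F: "iscov (is_submonoid M) (carrier M) F"
  have fin: "finite F" and FP: "\<forall>H\<in>F. is_submonoid M H \<and> H \<noteq> carrier M"
    and FU: "\<Union>F = carrier M" using F unfolding iscov_def by auto
  let ?G = "(\<lambda>H. H - {\<one>}) ` (F - {{\<one>}})"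
  have "iscov (is_subsemigroup (mult M) ?S) ?S ?G"
    unfolding iscov_def
  proof (intro conjI ballI)
    show "finite ?G" using fin by simp
  next
    fix K assume "K \<in> ?G"
    then obtain H where H: "H \<in> F" "H \<noteq> {\<one>}" "K = H - {\<one>}" by blast
    have HC: "H \<subseteq> carrier M" and cl: "\<forall>x\<in>H. \<forall>y\<in>H. x \<otimes> y \<in> H" and o: "\<one> \<in> H"
      and ne: "H \<noteq> carrier M"
      using FP H(1) unfolding is_submonoid_def is_subsemigroup_def by auto
    have "K \<subseteq> ?S" using HC H(3) by auto
    moreover have "K \<noteq> {}" using H(2,3) o by auto
    moreover have "\<forall>x\<in>K. \<forall>y\<in>K. x \<otimes> y \<in> K"
    proof (intro ballI)
      fix x y assume "x \<in> K" "y \<in> K"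
      then have xs: "x \<in> H" "y \<in> H" "x \<in> ?S" "y \<in> ?S" using HC H(3) by auto
      then have "x \<otimes> y \<in> H" "x \<otimes> y \<in> ?S" using cl clS by blast+
      then show "x \<otimes> y \<in> K" using H(3) by auto
    qed
    ultimately show "is_subsemigroup (mult M) ?S K" unfolding is_subsemigroup_def by blast
    show "K \<noteq> ?S"
    proof
      assume "K = ?S"
      then have "H = carrier M" using H(3) HC o by auto
      then show False using ne by simp
    qed
  next
    show "\<Union>?G = ?S"
    proof
      show "\<Union>?G \<subseteq> ?S" using FU by auto
      show "?S \<subseteq> \<Union>?G"
      proof
        fix x assume x: "x \<in> ?S"
        then obtain H where "H \<in> F" "x \<in> H" using FU by auto
        moreover have "H \<noteq> {\<one>}" using x \<open>x \<in> H\<close> by auto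
        ultimately show "x \<in> \<Union>?G" using x by blast
      qed
    qed
  qed
  moreover have "card ?G \<le> card F"
  proof -
    have "card ?G \<le> card (F - {{\<one>}})" by (rule card_image_le) (use fin in simp)
    also have "\<dots> \<le> card F" using fin by (simp add: card_mono)
    finally show ?thesis .
  qed
  ultimately show "\<exists>G. iscov (is_subsemigroup (mult M) ?S) ?S G \<and> card G \<le> card F" by blast
qed

lemma part2_b:
  fixes M (structure)
  assumes "monoid M" "carrier M - {\<one>} \<noteq> {}"
    "is_subsemigroup (mult M) (carrier M) (carrier M - {\<one>})"
  shows "sigma_m M \<le> sigma_s_semi (mult M) (carrier M - {\<one>})"
  unfolding sigma_m_def sigma_s_semi_def
proof (rule covnum_transfer)
  interpret monoid M by fact
  let ?S = "carrier M - {\<one>}"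
  fix F assume F: "iscov (is_subsemigroup (mult M) ?S) ?S F"
  have fin: "finite F" and FP: "\<forall>H\<in>F. is_subsemigroup (mult M) ?S H \<and> H \<noteq> ?S"
    and FU: "\<Union>F = ?S" using F unfolding iscov_def by auto
  let ?G = "insert \<one> ` F"
  have "iscov (is_submonoid M) (carrier M) ?G"
    unfolding iscov_def
  proof (intro conjI ballI)
    show "finite ?G" using fin by simp
  next
    fix K assume "K \<in> ?G"
    then obtain H where H: "H \<in> F" "K = insert \<one> H" by blast
    have HS: "H \<subseteq> ?S" and ne: "H \<noteq> ?S" and sH0: "is_subsemigroup (mult M) ?S H"
      using FP H(1) unfolding is_subsemigroup_def by auto
    have sH: "is_subsemigroup (mult M) (carrier M) H"
      using sH0 unfolding is_subsemigroup_def by auto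
    show "is_submonoid M K" using insert_one_submonoid[OF assms(1) sH] H by simp
    show "K \<noteq> carrier M"
    proof
      assume "K = carrier M"
      then have "H = ?S" using H(2) HS by auto
      then show False using ne by simp
    qed
  next
    have "F \<noteq> {}" using FU assms(2) by auto
    then show "\<Union>?G = carrier M" using FU by auto
  qed
  moreover have "card ?G \<le> card F" by (rule card_image_le) (use fin in simp)
  ultimately show "\<exists>G. iscov (is_submonoid M) (carrier M) G \<and> card G \<le> card F" by blast
qed


lemma cov2:
  fixes M (structure)
  assumes "monoid M" "is_submonoid M T" "is_submonoid M (insert \<one> (carrier M - T))"
    "T \<noteq> carrier M" "a \<in> T" "a \<noteq> \<one>"
  shows "sigma_m M \<le> 2"
  unfolding sigma_m_def
proof (rule covnum_le2)
  have "T \<subseteq> carrier M" using assms(2) unfolding is_submonoid_def is_subsemigroup_def by auto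
  moreover have "\<one> \<in> carrier M" using assms(1) by (simp add: monoid.one_closed)
  ultimately show "iscov (is_submonoid M) (carrier M) {T, insert \<one> (carrier M - T)}"
    using assms unfolding iscov_def by auto
qed

lemma part3:
  fixes M (structure)
  assumes "monoid M" "\<not> group M"
    "\<not> (carrier M - {\<one>} \<noteq> {} \<and> is_subsemigroup (mult M) (carrier M) (carrier M - {\<one>}))"
  shows "sigma_m M \<le> 2"
proof -
  interpret monoid M by fact
  let ?S = "carrier M - {\<one>}"
  have Sne: "?S \<noteq> {}"
  proof
    assume "?S = {}"
    then have "carrier M \<subseteq> Units M" using Units_one_closed by auto
    then show False using assms(1,2) unfolding group_def group_axioms_def by blast
  qed
  then have "\<not> is_subsemigroup (mult M) (carrier M) ?S" using assms(3) by blast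
  then obtain a b where ab: "a \<in> carrier M" "b \<in> carrier M" "a \<noteq> \<one>" "b \<noteq> \<one>" "a \<otimes> b = \<one>"
    using Sne unfolding is_subsemigroup_def by auto
  define R where "R = {x \<in> carrier M. \<exists>y\<in>carrier M. x \<otimes> y = \<one>}"
  define L where "L = {x \<in> carrier M. \<exists>y\<in>carrier M. y \<otimes> x = \<one>}"
  have Rsub: "is_submonoid M R"
    unfolding is_submonoid_def is_subsemigroup_def
  proof (intro conjI ballI)
    show "R \<subseteq> carrier M" unfolding R_def by auto
    show "R \<noteq> {}" "\<one> \<in> R" unfolding R_def by (auto intro!: bexI[of _ \<one>])
    fix x y assume "x \<in> R" "y \<in> R"
    then obtain x' y' where "x \<in> carrier M" "x' \<in> carrier M" "x \<otimes> x' = \<one>"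
      "y \<in> carrier M" "y' \<in> carrier M" "y \<otimes> y' = \<one>" unfolding R_def by auto
    then have "(x \<otimes> y) \<otimes> (y' \<otimes> x') = \<one>" by (metis m_assoc m_closed l_one)
    then show "x \<otimes> y \<in> R" unfolding R_def
      using \<open>x \<in> carrier M\<close> \<open>y \<in> carrier M\<close> \<open>x' \<in> carrier M\<close> \<open>y' \<in> carrier M\<close> by auto
  qed
  have Lsub: "is_submonoid M L"
    unfolding is_submonoid_def is_subsemigroup_def
  proof (intro conjI ballI)
    show "L \<subseteq> carrier M" unfolding L_def by auto
    show "L \<noteq> {}" "\<one> \<in> L" unfolding L_def by (auto intro!: bexI[of _ \<one>])
    fix x y assume "x \<in> L" "y \<in> L"
    then obtain x' y' where "x \<in> carrier M" "x' \<in> carrier M" "x' \<otimes> x = \<one>"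
      "y \<in> carrier M" "y' \<in> carrier M" "y' \<otimes> y = \<one>" unfolding L_def by auto
    then have "(y' \<otimes> x') \<otimes> (x \<otimes> y) = \<one>" by (metis m_assoc m_closed l_one)
    then show "x \<otimes> y \<in> L" unfolding L_def
      using \<open>x \<in> carrier M\<close> \<open>y \<in> carrier M\<close> \<open>x' \<in> carrier M\<close> \<open>y' \<in> carrier M\<close> by auto
  qed
  have Rc: "is_submonoid M (insert \<one> (carrier M - R))"
    unfolding is_submonoid_def is_subsemigroup_def
  proof (intro conjI ballI)
    show "insert \<one> (carrier M - R) \<subseteq> carrier M" by auto
    show "insert \<one> (carrier M - R) \<noteq> {}" "\<one> \<in> insert \<one> (carrier M - R)" by auto
    fix x y assume x: "x \<in> insert \<one> (carrier M - R)" and y: "y \<in> insert \<one> (carrier M - R)"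
    show "x \<otimes> y \<in> insert \<one> (carrier M - R)"
    proof (cases "x = \<one>")
      case True then show ?thesis using y by auto
    next
      case False
      then have xc: "x \<in> carrier M" "x \<notin> R" using x by auto
      have yc: "y \<in> carrier M" using y by auto
      have "x \<otimes> y \<notin> R"
      proof
        assume "x \<otimes> y \<in> R"
        then obtain w where "w \<in> carrier M" "(x \<otimes> y) \<otimes> w = \<one>" unfolding R_def by auto
        then have "x \<otimes> (y \<otimes> w) = \<one>" "y \<otimes> w \<in> carrier M" using xc yc by (auto simp: m_assoc)
        then show False using xc unfolding R_def by auto
      qed
      then show ?thesis using xc yc by auto
    qed
  qed
  have Lc: "is_submonoid M (insert \<one> (carrier M - L))"
    unfolding is_submonoid_def is_subsemigroup_def
  proof (intro conjI ballI)
    show "insert \<one> (carrier M - L) \<subseteq> carrier M" by auto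
    show "insert \<one> (carrier M - L) \<noteq> {}" "\<one> \<in> insert \<one> (carrier M - L)" by auto
    fix x y assume x: "x \<in> insert \<one> (carrier M - L)" and y: "y \<in> insert \<one> (carrier M - L)"
    show "x \<otimes> y \<in> insert \<one> (carrier M - L)"
    proof (cases "y = \<one>")
      case True then show ?thesis using x by auto
    next
      case False
      then have yc: "y \<in> carrier M" "y \<notin> L" using y by auto
      have xc: "x \<in> carrier M" using x by auto
      have "x \<otimes> y \<notin> L"
      proof
        assume "x \<otimes> y \<in> L"
        then obtain w where "w \<in> carrier M" "w \<otimes> (x \<otimes> y) = \<one>" unfolding L_def by auto
        then have "(w \<otimes> x) \<otimes> y = \<one>" "w \<otimes> x \<in> carrier M" using xc yc by (auto simp: m_assoc)
        then show False using yc unfolding L_def by auto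
      qed
      then show ?thesis using xc yc by auto
    qed
  qed
  have aR: "a \<in> R" unfolding R_def using ab by auto
  have bL: "b \<in> L" unfolding L_def using ab by auto
  show ?thesis
  proof (cases "R = carrier M")
    case False
    show ?thesis by (rule cov2[OF assms(1) Rsub Rc False aR ab(3)])
  next
    case RT: True
    show ?thesis
    proof (cases "L = carrier M")
      case False
      show ?thesis by (rule cov2[OF assms(1) Lsub Lc False bL ab(4)])
    next
      case True
      have "carrier M \<subseteq> Units M"
      proof
        fix x assume xc: "x \<in> carrier M"
        then obtain y z where y: "y \<in> carrier M" "x \<otimes> y = \<one>" and z: "z \<in> carrier M" "z \<otimes> x = \<one>"
          using RT True unfolding R_def L_def by blast
        have "z = z \<otimes> (x \<otimes> y)" using y z by (metis r_one)
        also have "\<dots> = (z \<otimes> x) \<otimes> y" using m_assoc[OF z(1) xc y(1)] by simp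
        also have "\<dots> = y" using y z by (metis l_one)
        finally have "z = y" .
        then show "x \<in> Units M" unfolding Units_def using xc y z by auto
      qed
      then show ?thesis using assms(1,2) unfolding group_def group_axioms_def by blast
    qed
  qed
qed


theorem mainTheorem4:
  fixes M :: "('a, 'b) monoid_scheme"
  assumes "monoid M"
  shows "(group M \<longrightarrow> sigma_m M = sigma_m_star M \<and> sigma_m_star M = sigma_s M)
    \<and> ((carrier M - {\<one>\<^bsub>M\<^esub>} \<noteq> {} \<and>
          is_subsemigroup (mult M) (carrier M) (carrier M - {\<one>\<^bsub>M\<^esub>})) \<longrightarrow>
        sigma_m_star M \<le> sigma_m M \<and>
        sigma_m M = sigma_s_semi (mult M) (carrier M - {\<one>\<^bsub>M\<^esub>}) \<and>
        sigma_s M = 2)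
    \<and> ((\<not> group M \<and> \<not> (carrier M - {\<one>\<^bsub>M\<^esub>} \<noteq> {} \<and>
          is_subsemigroup (mult M) (carrier M) (carrier M - {\<one>\<^bsub>M\<^esub>}))) \<longrightarrow>
        sigma_m M = 2 \<and> sigma_m_star M = 2 \<and> sigma_s M = 2)"
proof (intro conjI impI)
  have a: "sigma_m_star M \<le> sigma_m M" by (rule sm_le_sms[OF assms])
  have b: "sigma_s M \<le> sigma_m_star M" by (rule ss_le_sms)
  {
    assume g: "group M"
    have c: "sigma_m M \<le> sigma_s M" by (rule group_part[OF g])
    show "sigma_m M = sigma_m_star M" using a b c by (meson order_trans antisym)
    show "sigma_m_star M = sigma_s M" using a b c by (meson order_trans antisym)
  }
  {
    assume h: "carrier M - {\<one>\<^bsub>M\<^esub>} \<noteq> {} \<and>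
          is_subsemigroup (mult M) (carrier M) (carrier M - {\<one>\<^bsub>M\<^esub>})"
    show "sigma_m_star M \<le> sigma_m M" by (rule a)
    show "sigma_m M = sigma_s_semi (mult M) (carrier M - {\<one>\<^bsub>M\<^esub>})"
      using part2_a[OF assms] part2_b[OF assms] h by (meson antisym)
    show "sigma_s M = 2" using part2_s[OF assms] h by blast
  }
  {
    assume h: "\<not> group M \<and> \<not> (carrier M - {\<one>\<^bsub>M\<^esub>} \<noteq> {} \<and>
          is_subsemigroup (mult M) (carrier M) (carrier M - {\<one>\<^bsub>M\<^esub>}))"
    have c: "sigma_m M \<le> 2" using part3[OF assms] h by blast
    have ne: "carrier M \<noteq> {}" using monoid.one_closed[OF assms] by auto
    have d: "2 \<le> sigma_s M" unfolding sigma_s_def sigma_s_semi_def by (rule covnum_ge2[OF ne])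
    show "sigma_m M = 2" using a b c d by (meson order_trans antisym)
    show "sigma_m_star M = 2" using a b c d by (meson order_trans antisym)
    show "sigma_s M = 2" using a b c d by (meson order_trans antisym)
  }
qed

end
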